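(* Let $K\ge1$, $N_1,\ldots,N_K\ge1$ integers, $T\ge1$, and let $\ell_t:\Delta_{N_1}\times\cdots\times\Delta_{N_K}\to\mathbb R$, $t\ge1$, be differentiable and jointly convex. Assume that for all $k$, $\max_{1\le t\le T}\sup_{\boldsymbol u}\max_{1\le i\le N_k}|\partial_{u^{(k)}_i}\ell_t(\boldsymbol u)|\le G^{(k)}$ with $G^{(k)}>0$. Then the Adaptive Multi-variable Exponentiated Gradient algorithm (described in the context) satisfies $$\sum_{t=1}^T\ell_t\big(\hat{\boldsymbol u}^{(1)}_t,\ldots,\hat{\boldsymbol u}^{(K)}_t\big)-\min_{(\boldsymbol u^{(1)},\ldots,\boldsymbol u^{(K)})}\sum_{t=1}^T\ell_t\big(\boldsymbol u^{(1)},\ldots,\boldsymbol u^{(K)}\big)\le2\sum_{k=1}^KG^{(k)}\sqrt{T^{(k)}\log N_k},$$ where $T^{(k)}=\sum_{t=1}^T\mathbb 1\{\sup_{\boldsymbol u}\max_i|\partial_{u^{(k)}_i}\ell_t(\boldsymbol u)|>0\}$ and the minimum is over $\Delta_{N_1}\times\cdots\times\Delta_{N_K}$.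
   Context: $\Delta_N=\{\boldsymbol u\in\mathbb R_+^N:\sum_iu_i=1\}$. Adaptive Multi-variable Exponentiated Gradient algorithm (with the constants $G^{(k)}$ as input): initialize $\hat{\boldsymbol u}^{(k)}_1=(1/N_k,\ldots,1/N_k)$. At each round $t$, output $(\hat{\boldsymbol u}^{(1)}_t,\ldots,\hat{\boldsymbol u}^{(K)}_t)$ and observe $\ell_t$; set $$\eta^{(k)}_{t+1}=\frac1{G^{(k)}}\sqrt{\frac{\log N_k}{1+\sum_{s=1}^t\mathbb 1\{\sup_{\boldsymbol u}\max_i|\partial_{u^{(k)}_i}\ell_s(\boldsymbol u)|>0\}}},$$ and $\hat u^{(k)}_{t+1,i}=\exp\big(-\eta^{(k)}_{t+1}\sum_{s=1}^t\partial_{u^{(k)}_i}\ell_s(\hat{\boldsymbol u}^{(1)}_s,\ldots,\hat{\boldsymbol u}^{(K)}_s)\big)/Z^{(k)}_{t+1}$, where $Z^{(k)}_{t+1}$ normalizes over $i\in\{1,\ldots,N_k\}$. *)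

theory Defs
  imports "HOL-Analysis.Analysis"
begin

text \<open>Coordinates of the ambient space are indexed by a finite type 'n; the map
  blk assigns each coordinate to its block k (block k has N_k = card of its fibre
  coordinates). A point of the product of simplices is a vector u :: real^'n.\<close>

definition blocksize :: "('n::finite \<Rightarrow> nat) \<Rightarrow> nat \<Rightarrow> nat" where
  "blocksize blk k = card {i. blk i = k}"

definition prod_simplex :: "nat \<Rightarrow> ('n::finite \<Rightarrow> nat) \<Rightarrow> (real^'n) set" where
  "prod_simplex K blk = {u. (\<forall>i. 0 \<le> u $ i) \<and> (\<forall>k<K. (\<Sum>i\<in>{i. blk i = k}. u $ i) = 1)}"

definition partial :: "(real^'n::finite \<Rightarrow> real) \<Rightarrow> real^'n \<Rightarrow> 'n \<Rightarrow> real" where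
  "partial f u i = frechet_derivative f (at u) (axis i 1)"

definition grad :: "(real^'n::finite \<Rightarrow> real) \<Rightarrow> real^'n \<Rightarrow> real^'n" where
  "grad f u = (\<chi> i. partial f u i)"

definition active :: "nat \<Rightarrow> ('n::finite \<Rightarrow> nat) \<Rightarrow> (nat \<Rightarrow> real^'n \<Rightarrow> real) \<Rightarrow> nat \<Rightarrow> nat \<Rightarrow> bool" where
  "active K blk L k s = (\<exists>u\<in>prod_simplex K blk. \<exists>i. blk i = k \<and> \<bar>partial (L s) u i\<bar> > 0)"

text \<open>Learning rate eta^{(k)}_{t+1} (uses rounds 1..t).\<close>
definition eta :: "nat \<Rightarrow> ('n::finite \<Rightarrow> nat) \<Rightarrow> (nat \<Rightarrow> real^'n \<Rightarrow> real) \<Rightarrow> (nat \<Rightarrow> real) \<Rightarrow> nat \<Rightarrow> nat \<Rightarrow> real" where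
  "eta K blk L G k t = (1 / G k) * sqrt (ln (real (blocksize blk k)) /
      (1 + real (card {s\<in>{1..t}. active K blk L k s})))"

text \<open>Exponential weights from cumulative gradient c, with learning rates eta_{t+1}:
  this is the play hat u_{t+1}.\<close>
definition weights :: "nat \<Rightarrow> ('n::finite \<Rightarrow> nat) \<Rightarrow> (nat \<Rightarrow> real^'n \<Rightarrow> real) \<Rightarrow> (nat \<Rightarrow> real) \<Rightarrow> nat \<Rightarrow> real^'n \<Rightarrow> real^'n" where
  "weights K blk L G t c = (\<chi> i. exp (- eta K blk L G (blk i) t * c $ i) /
      (\<Sum>j\<in>{j. blk j = blk i}. exp (- eta K blk L G (blk i) t * c $ j)))"

primrec cumgrad :: "nat \<Rightarrow> ('n::finite \<Rightarrow> nat) \<Rightarrow> (nat \<Rightarrow> real^'n \<Rightarrow> real) \<Rightarrow> (nat \<Rightarrow> real) \<Rightarrow> nat \<Rightarrow> real^'n" where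
  "cumgrad K blk L G 0 = 0"
| "cumgrad K blk L G (Suc t) = cumgrad K blk L G t
     + grad (L (Suc t)) (weights K blk L G t (cumgrad K blk L G t))"

definition ameg :: "nat \<Rightarrow> ('n::finite \<Rightarrow> nat) \<Rightarrow> (nat \<Rightarrow> real^'n \<Rightarrow> real) \<Rightarrow> (nat \<Rightarrow> real) \<Rightarrow> nat \<Rightarrow> real^'n" where
  "ameg K blk L G t = weights K blk L G (t - 1) (cumgrad K blk L G (t - 1))"

end

theory Submission
  imports Defs "HOL-Probability.Hoeffding"
begin

lemma hoeff_finite:
  fixes B :: "'a set" and p g :: "'a \<Rightarrow> real"
  assumes fin: "finite B" and p0: "\<And>i. i \<in> B \<Longrightarrow> p i \<ge> 0" and p1: "sum p B = 1"
    and gb: "\<And>i. i \<in> B \<Longrightarrow> \<bar>g i\<bar> \<le> G" and G0: "G > 0" and eta: "\<eta> \<ge> 0"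
  shows "ln (\<Sum>i\<in>B. p i * exp (- \<eta> * g i)) \<le> - \<eta> * (\<Sum>i\<in>B. p i * g i) + \<eta>^2 * G^2 / 2"
proof -
  define A where "A = exp (\<eta> * G)"
  define Bm where "Bm = exp (- \<eta> * G)"
  define t where "t = (\<lambda>i. (g i + G) / (2 * G))"
  have chord: "exp (- \<eta> * g i) \<le> (1 - t i) * A + t i * Bm" if "i \<in> B" for i
  proof -
    have t0: "t i \<ge> 0" "t i \<le> 1" using gb[OF that] G0 by (auto simp: t_def field_simps)
    have "(1 - t i) *\<^sub>R (\<eta> * G) + t i *\<^sub>R (- \<eta> * G) = - \<eta> * g i"
      using G0 by (simp add: t_def field_simps)
    then show ?thesis using convex_onD[OF exp_convex t0, of "\<eta> * G" "- \<eta> * G"]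
      by (simp add: A_def Bm_def)
  qed
  define m where "m = (\<Sum>i\<in>B. p i * g i)"
  have mb: "\<bar>m\<bar> \<le> G"
  proof -
    have "\<bar>m\<bar> \<le> (\<Sum>i\<in>B. \<bar>p i * g i\<bar>)" unfolding m_def by (rule sum_abs)
    also have "\<dots> \<le> (\<Sum>i\<in>B. p i * G)"
      by (intro sum_mono) (use p0 gb in \<open>auto simp: abs_mult intro: mult_left_mono\<close>)
    also have "\<dots> = G" using p1 by (simp add: sum_distrib_right[symmetric])
    finally show ?thesis .
  qed
  define q where "q = (G - m) / (2 * G)"
  have q0: "q \<ge> 0" using mb G0 by (simp add: q_def)
  have sumle: "(\<Sum>i\<in>B. p i * exp (- \<eta> * g i)) \<le> (\<Sum>i\<in>B. p i * ((1 - t i) * A + t i * Bm))"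
    by (intro sum_mono mult_left_mono chord p0)
  also have "\<dots> = q * A + (1 - q) * Bm"
  proof -
    have "(\<Sum>i\<in>B. p i * ((1 - t i) * A + t i * Bm)) = A * (\<Sum>i\<in>B. p i) - (A - Bm) * (\<Sum>i\<in>B. p i * t i)"
      by (simp add: algebra_simps sum_subtractf sum.distrib sum_distrib_left)
    also have "(\<Sum>i\<in>B. p i * t i) = ((\<Sum>i\<in>B. p i * g i) + G * sum p B) / (2 * G)"
      by (simp add: t_def sum_divide_distrib[symmetric] algebra_simps sum.distrib sum_distrib_left)
    also have "\<dots> = (m + G) / (2 * G)" using p1 by (simp add: m_def)
    finally have e1: "(\<Sum>i\<in>B. p i * ((1 - t i) * A + t i * Bm)) = A * 1 - (A - Bm) * ((m + G) / (2 * G))"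
      using p1 by simp
    have "q * A + (1 - q) * Bm = A * 1 - (A - Bm) * ((m + G) / (2 * G))"
      using G0 unfolding q_def by (simp add: field_simps)
    then show ?thesis using e1 by simp
  qed
  also have "\<dots> = Bm * (1 + q * (exp (2 * \<eta> * G) - 1))"
    by (simp add: A_def Bm_def algebra_simps flip: exp_add)
  finally have le: "(\<Sum>i\<in>B. p i * exp (- \<eta> * g i)) \<le> Bm * (1 + q * (exp (2 * \<eta> * G) - 1))" .
  have pos: "0 < (\<Sum>i\<in>B. p i * exp (- \<eta> * g i))"
  proof -
    have "B \<noteq> {}" using p1 by auto
    then obtain j where j: "j \<in> B" "p j > 0" using p1 p0
      by (metis less_eq_real_def sum_nonpos zero_less_one not_le)
    have "0 < p j * exp (- \<eta> * g j)" using j by simp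
    also have "\<dots> \<le> (\<Sum>i\<in>B. p i * exp (- \<eta> * g i))"
      by (rule member_le_sum) (use j fin p0 in auto)
    finally show ?thesis .
  qed
  have "ln (\<Sum>i\<in>B. p i * exp (- \<eta> * g i)) \<le> ln (Bm * (1 + q * (exp (2 * \<eta> * G) - 1)))"
    using le pos by simp
  also have "\<dots> = - \<eta> * G + ln (1 + q * (exp (2 * \<eta> * G) - 1))"
  proof -
    have "1 + q * (exp (2 * \<eta> * G) - 1) > 0"
      using q0 eta G0 by (intro add_pos_nonneg mult_nonneg_nonneg) auto
    then show ?thesis by (simp add: Bm_def ln_mult)
  qed
  also have "\<dots> \<le> - \<eta> * G + (2 * \<eta> * G) * q + (2 * \<eta> * G)^2 / 8"
    using Hoeffdings_lemma_aux[of "2 * \<eta> * G" q] eta G0 q0 by simp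
  also have "\<dots> = - \<eta> * m + \<eta>^2 * G^2 / 2"
    using G0 by (simp add: q_def field_simps power2_eq_square)
  finally show ?thesis by (simp add: m_def)
qed


definition Wf :: "'a set \<Rightarrow> real \<Rightarrow> ('a \<Rightarrow> real) \<Rightarrow> real" where
  "Wf B \<eta> C = - (1 / \<eta>) * ln ((\<Sum>i\<in>B. exp (- \<eta> * C i)) / card B)"

lemma sum_exp_pos: "finite B \<Longrightarrow> B \<noteq> {} \<Longrightarrow> 0 < (\<Sum>i\<in>B. exp (f i :: real))"
  by (intro sum_pos) auto

lemma Wf_mono:
  fixes B :: "'a set"
  assumes fin: "finite B" and ne: "B \<noteq> {}" and a: "0 < a" and ab: "a \<le> b"
  shows "Wf B b C \<le> Wf B a C"
proof -
  define N where "N = real (card B)"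
  have N0: "N > 0" using fin ne by (simp add: N_def card_gt_0_iff)
  define y where "y = (\<lambda>i. exp (- a * C i))"
  define r where "r = b / a"
  have r1: "r \<ge> 1" using a ab by (simp add: r_def)
  have ypos: "\<And>i. y i > 0" by (simp add: y_def)
  have yr: "y i powr r = exp (- b * C i)" for i
    using a by (simp add: y_def powr_def r_def field_simps)
  have J: "(\<Sum>i\<in>B. (1 / N) *\<^sub>R y i) powr r \<le> (\<Sum>i\<in>B. (1 / N) * y i powr r)"
    by (rule convex_on_sum[OF fin ne powr_convex[OF r1]]) (use N0 ypos in \<open>auto simp: N_def\<close>)
  have m1: "(\<Sum>i\<in>B. (1 / N) *\<^sub>R y i) = (\<Sum>i\<in>B. y i) / N"
    by (simp add: sum_divide_distrib)
  have m2: "(\<Sum>i\<in>B. (1 / N) * y i powr r) = (\<Sum>i\<in>B. exp (- b * C i)) / N"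
    by (simp add: yr sum_divide_distrib)
  have mp: "(\<Sum>i\<in>B. y i) / N > 0" using N0 sum_exp_pos[OF fin ne] by (simp add: y_def)
  have "((\<Sum>i\<in>B. y i) / N) powr r \<le> (\<Sum>i\<in>B. exp (- b * C i)) / N"
    using J m1 m2 by simp
  hence "ln (((\<Sum>i\<in>B. y i) / N) powr r) \<le> ln ((\<Sum>i\<in>B. exp (- b * C i)) / N)"
    using mp N0 sum_exp_pos[OF fin ne, of "\<lambda>i. - b * C i"] by (subst ln_le_cancel_iff) auto
  hence "r * ln ((\<Sum>i\<in>B. y i) / N) \<le> ln ((\<Sum>i\<in>B. exp (- b * C i)) / N)"
    using mp by (simp add: ln_powr)
  hence "(1 / a) * ln ((\<Sum>i\<in>B. y i) / N) \<le> (1 / b) * ln ((\<Sum>i\<in>B. exp (- b * C i)) / N)"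
    using a ab by (simp add: r_def field_simps)
  thus ?thesis by (simp add: Wf_def y_def N_def)
qed

lemma Wf_upper:
  fixes B :: "'a set"
  assumes fin: "finite B" and ne: "B \<noteq> {}" and eta: "0 < \<eta>"
    and v0: "\<And>i. i \<in> B \<Longrightarrow> v i \<ge> 0" and v1: "sum v B = 1"
  shows "Wf B \<eta> C \<le> (\<Sum>i\<in>B. v i * C i) + ln (card B) / \<eta>"
proof -
  define N where "N = real (card B)"
  have N0: "N > 0" using fin ne by (simp add: N_def card_gt_0_iff)
  have each: "Wf B \<eta> C \<le> C j + ln N / \<eta>" if j: "j \<in> B" for j
  proof -
    have "exp (- \<eta> * C j) \<le> (\<Sum>i\<in>B. exp (- \<eta> * C i))"
      by (rule member_le_sum) (use j fin in auto)
    hence "ln (exp (- \<eta> * C j) / N) \<le> ln ((\<Sum>i\<in>B. exp (- \<eta> * C i)) / N)"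
      using N0 sum_exp_pos[OF fin ne, of "\<lambda>i. - \<eta> * C i"] by (subst ln_le_cancel_iff) (auto intro: divide_right_mono)
    hence "- \<eta> * C j - ln N \<le> ln ((\<Sum>i\<in>B. exp (- \<eta> * C i)) / N)"
      using N0 by (simp add: ln_div)
    hence "- (1 / \<eta>) * ln ((\<Sum>i\<in>B. exp (- \<eta> * C i)) / N) \<le> - (1 / \<eta>) * (- \<eta> * C j - ln N)"
      using eta by (intro mult_left_mono_neg) auto
    also have "\<dots> = C j + ln N / \<eta>" using eta by (simp add: field_simps)
    finally show ?thesis by (simp add: Wf_def N_def)
  qed
  have "Wf B \<eta> C = (\<Sum>i\<in>B. v i * Wf B \<eta> C)" using v1 by (simp add: sum_distrib_right[symmetric])
  also have "\<dots> \<le> (\<Sum>i\<in>B. v i * (C i + ln N / \<eta>))"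
    by (intro sum_mono mult_left_mono each v0)
  also have "\<dots> = (\<Sum>i\<in>B. v i * C i) + (\<Sum>i\<in>B. v i) * (ln N / \<eta>)"
    by (simp add: distrib_left sum.distrib sum_distrib_right sum_divide_distrib)
  also have "\<dots> = (\<Sum>i\<in>B. v i * C i) + ln N / \<eta>" using v1 by simp
  finally show ?thesis by (simp add: N_def)
qed

lemma Wf_step:
  fixes B :: "'a set"
  assumes fin: "finite B" and ne: "B \<noteq> {}" and eta: "0 < \<eta>" and G0: "G > 0"
    and gb: "\<And>i. i \<in> B \<Longrightarrow> \<bar>g i\<bar> \<le> G"
  shows "(\<Sum>i\<in>B. exp (- \<eta> * C i) / (\<Sum>j\<in>B. exp (- \<eta> * C j)) * g i)
     \<le> Wf B \<eta> (\<lambda>i. C i + g i) - Wf B \<eta> C + \<eta> * G^2 / 2"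
proof -
  define Z where "Z = (\<Sum>j\<in>B. exp (- \<eta> * C j))"
  have Z0: "Z > 0" unfolding Z_def by (rule sum_exp_pos[OF fin ne])
  define p where "p = (\<lambda>i. exp (- \<eta> * C i) / Z)"
  have p0: "\<And>i. p i \<ge> 0" using Z0 by (simp add: p_def)
  have p1: "sum p B = 1" unfolding p_def sum_divide_distrib[symmetric] using Z0 by (simp add: Z_def)
  have H: "ln (\<Sum>i\<in>B. p i * exp (- \<eta> * g i)) \<le> - \<eta> * (\<Sum>i\<in>B. p i * g i) + \<eta>^2 * G^2 / 2"
    by (rule hoeff_finite[OF fin _ p1 gb G0]) (use p0 eta in auto)
  have S: "(\<Sum>i\<in>B. p i * exp (- \<eta> * g i)) = (\<Sum>i\<in>B. exp (- \<eta> * (C i + g i))) / Z"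
    by (simp add: p_def sum_divide_distrib algebra_simps exp_add flip: exp_add)
  have Z2: "(\<Sum>i\<in>B. exp (- \<eta> * (C i + g i))) > 0" by (rule sum_exp_pos[OF fin ne])
  have N0: "real (card B) > 0" using fin ne by (simp add: card_gt_0_iff)
  have "Wf B \<eta> (\<lambda>i. C i + g i) - Wf B \<eta> C
      = - (1 / \<eta>) * (ln ((\<Sum>i\<in>B. exp (- \<eta> * (C i + g i))) / card B) - ln (Z / card B))"
    by (simp add: Wf_def Z_def algebra_simps)
  also have "\<dots> = - (1 / \<eta>) * ln (\<Sum>i\<in>B. p i * exp (- \<eta> * g i))"
  proof -
    have "ln ((\<Sum>i\<in>B. exp (- \<eta> * (C i + g i))) / card B) - ln (Z / card B)
       = ln ((\<Sum>i\<in>B. exp (- \<eta> * (C i + g i))) / Z)"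
      using Z0 Z2 N0 by (simp add: ln_div)
    then show ?thesis by (simp only: S)
  qed
  also have "\<dots> \<ge> - (1 / \<eta>) * (- \<eta> * (\<Sum>i\<in>B. p i * g i) + \<eta>^2 * G^2 / 2)"
    using H eta by (intro mult_left_mono_neg) auto
  finally have F: "- (1 / \<eta>) * (- \<eta> * (\<Sum>i\<in>B. p i * g i) + \<eta>^2 * G^2 / 2) \<le> Wf B \<eta> (\<lambda>i. C i + g i) - Wf B \<eta> C" .
  have "- (1 / \<eta>) * (- \<eta> * (\<Sum>i\<in>B. p i * g i) + \<eta>^2 * G^2 / 2) = (\<Sum>i\<in>B. p i * g i) - \<eta> * G^2 / 2"
    using eta by (simp add: field_simps power2_eq_square)
  with F have "(\<Sum>i\<in>B. p i * g i) - \<eta> * G^2 / 2 \<le> Wf B \<eta> (\<lambda>i. C i + g i) - Wf B \<eta> C"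
    by simp
  thus ?thesis by (simp add: p_def Z_def)
qed


lemma sqrt_step_ineq:
  fixes x :: real assumes "x \<ge> 0"
  shows "1 / sqrt (x + 1) + 2 * sqrt x \<le> 2 * sqrt (x + 1)"
proof -
  define a where "a = sqrt x"
  define b where "b = sqrt (x + 1)"
  have a0: "a \<ge> 0" and b0: "b > 0" using assms by (auto simp: a_def b_def)
  have ab: "a \<le> b" using assms by (simp add: a_def b_def)
  have "(b - a) * (b + a) = 1" using assms by (simp add: a_def b_def algebra_simps)
  hence "b - a = 1 / (b + a)" using a0 b0 by (simp add: field_simps)
  also have "\<dots> \<ge> 1 / (2 * b)" using a0 b0 ab by (intro divide_left_mono) auto
  finally have "1 / (2 * b) \<le> b - a" .
  hence "1 / b \<le> 2 * (b - a)" using b0 by (simp add: field_simps)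
  thus ?thesis by (simp add: a_def b_def algebra_simps)
qed

lemma act_set_Suc:
  "{t\<in>{1..Suc T}. act t} = {t\<in>{1..T}. act t} \<union> (if act (Suc T) then {Suc T} else {})"
  by (auto simp: le_Suc_eq)

lemma act_card_Suc:
  "card {t\<in>{1..Suc T}. act t} = card {t\<in>{1..T}. act t} + (if act (Suc T) then 1 else 0)"
proof (cases "act (Suc T)")
  case True
  have "{t\<in>{1..Suc T}. act t} = insert (Suc T) {t\<in>{1..T}. act t}" using True by (auto simp: le_Suc_eq)
  then show ?thesis using True by simp
next
  case False
  have "{t\<in>{1..Suc T}. act t} = {t\<in>{1..T}. act t}" using False by (auto simp: le_Suc_eq)
  then show ?thesis using False by simp
qed

lemma sqrt_sum_bound:
  fixes act :: "nat \<Rightarrow> bool"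
  shows "(\<Sum>t\<in>{t\<in>{1..T}. act t}. 1 / sqrt (1 + real (card {s\<in>{1..t-1}. act s})))
     \<le> (if card {t\<in>{1..T}. act t} = 0 then 0 else 2 * sqrt (real (card {t\<in>{1..T}. act t})) - 1)"
proof (induction T)
  case 0
  then show ?case by simp
next
  case (Suc T)
  define c where "c = card {t\<in>{1..T}. act t}"
  define S where "S = (\<Sum>t\<in>{t\<in>{1..T}. act t}. 1 / sqrt (1 + real (card {s\<in>{1..t-1}. act s})))"
  have IH: "S \<le> (if c = 0 then 0 else 2 * sqrt c - 1)" unfolding S_def c_def by (rule Suc.IH)
  show ?case
  proof (cases "act (Suc T)")
    case False
    have e: "{t\<in>{1..Suc T}. act t} = {t\<in>{1..T}. act t}" using False by (auto simp: le_Suc_eq)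
    show ?thesis using IH unfolding e S_def c_def .
  next
    case True
    have "(\<Sum>t\<in>{t\<in>{1..Suc T}. act t}. 1 / sqrt (1 + real (card {s\<in>{1..t-1}. act s})))
        = S + 1 / sqrt (1 + real c)"
    proof -
      have e: "{t\<in>{1..Suc T}. act t} = insert (Suc T) {t\<in>{1..T}. act t}" using True by (auto simp: le_Suc_eq)
      show ?thesis unfolding e S_def c_def by (subst sum.insert) auto
    qed
    moreover have "card {t\<in>{1..Suc T}. act t} = c + 1" using act_card_Suc[of T act] True unfolding c_def by (simp only: True if_True)
    moreover have "S + 1 / sqrt (1 + real c) \<le> 2 * sqrt (real (c + 1)) - 1"
    proof (cases "c = 0")
      case True then show ?thesis using IH by simp
    next
      case False
      have "S + 1 / sqrt (1 + real c) \<le> 2 * sqrt c - 1 + 1 / sqrt (real c + 1)"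
        using IH False by (simp add: add.commute)
      also have "\<dots> \<le> 2 * sqrt (real c + 1) - 1" using sqrt_step_ineq[of "real c"] by simp
      finally show ?thesis by (simp add: add.commute)
    qed
    ultimately show ?thesis by simp
  qed
qed


lemma Wf_cong: "(\<And>i. i \<in> B \<Longrightarrow> C i = C' i) \<Longrightarrow> Wf B \<eta> C = Wf B \<eta> C'"
  unfolding Wf_def by (simp cong: sum.cong)

lemma block_regret:
  fixes B :: "'a set" and g C :: "nat \<Rightarrow> 'a \<Rightarrow> real" and act :: "nat \<Rightarrow> bool"
    and v :: "'a \<Rightarrow> real" and e :: "nat \<Rightarrow> real" and p :: "nat \<Rightarrow> 'a \<Rightarrow> real"
  assumes fin: "finite B" and N1: "card B \<ge> 1" and G0: "G > 0"
    and C0: "\<And>i. i \<in> B \<Longrightarrow> C 0 i = 0"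
    and CS: "\<And>t i. i \<in> B \<Longrightarrow> C (Suc t) i = C t i + g (Suc t) i"
    and inact: "\<And>t i. t \<in> {1..T} \<Longrightarrow> \<not> act t \<Longrightarrow> i \<in> B \<Longrightarrow> g t i = 0"
    and bnd: "\<And>t i. t \<in> {1..T} \<Longrightarrow> i \<in> B \<Longrightarrow> \<bar>g t i\<bar> \<le> G"
    and v0: "\<And>i. i \<in> B \<Longrightarrow> v i \<ge> 0" and v1: "sum v B = 1"
    and e: "\<And>t. e t = (1 / G) * sqrt (ln (real (card B)) / (1 + real (card {s\<in>{1..t}. act s})))"
    and p: "\<And>t i. i \<in> B \<Longrightarrow> p t i = exp (- e (t - 1) * C (t - 1) i) / (\<Sum>j\<in>B. exp (- e (t - 1) * C (t - 1) j))"
  shows "(\<Sum>t=1..T. \<Sum>i\<in>B. g t i * (p t i - v i))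
     \<le> 2 * (G * sqrt (real (card {t\<in>{1..T}. act t}) * ln (real (card B))))"
proof -
  have ne: "B \<noteq> {}" using N1 by auto
  have Csum: "C t i = (\<Sum>s=1..t. g s i)" if "i \<in> B" for t i
    by (induction t) (use that C0 CS in auto)
  have split: "(\<Sum>t=1..T. \<Sum>i\<in>B. g t i * (p t i - v i))
      = (\<Sum>t=1..T. \<Sum>i\<in>B. p t i * g t i) - (\<Sum>i\<in>B. v i * C T i)"
  proof -
    have "(\<Sum>t=1..T. \<Sum>i\<in>B. g t i * (p t i - v i))
        = (\<Sum>t=1..T. \<Sum>i\<in>B. p t i * g t i) - (\<Sum>t=1..T. \<Sum>i\<in>B. v i * g t i)"
      by (simp add: algebra_simps sum_subtractf)
    also have "(\<Sum>t=1..T. \<Sum>i\<in>B. v i * g t i) = (\<Sum>i\<in>B. v i * C T i)"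
      by (subst sum.swap) (simp add: Csum sum_distrib_left)
    finally show ?thesis .
  qed
  define n where "n = card {t\<in>{1..T}. act t}"
  show ?thesis
  proof (cases "card B = 1 \<or> n = 0")
    case True
    have zero: "(\<Sum>t=1..T. \<Sum>i\<in>B. g t i * (p t i - v i)) = 0"
    proof (cases "card B = 1")
      case True
      then obtain b where b: "B = {b}" by (auto simp: card_Suc_eq)
      have "v b = 1" using v1 b by simp
      moreover have "p t b = 1" for t using p[of b t] b by simp
      ultimately show ?thesis using b by simp
    next
      case False
      hence n0: "n = 0" using \<open>card B = 1 \<or> n = 0\<close> by simp
      have "{t\<in>{1..T}. act t} = {}" using n0 unfolding n_def by simp
      hence "\<not> act t" if "t \<in> {1..T}" for t using that by blast
      hence "g t i = 0" if "t \<in> {1..T}" "i \<in> B" for t i using inact that by blast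
      thus ?thesis by simp
    qed
    have "0 \<le> 2 * (G * sqrt (real n * ln (real (card B))))"
      using G0 N1 by (intro mult_nonneg_nonneg) auto
    thus ?thesis using zero by (simp add: n_def)
  next
    case False
    hence N2: "card B \<ge> 2" and n1: "n \<ge> 1" using N1 by auto
    define lnN where "lnN = ln (real (card B))"
    have lnN0: "lnN > 0" using N2 by (simp add: lnN_def)
    define c where "c = (\<lambda>t. card {s\<in>{1..t}. act s})"
    have e': "e t = sqrt lnN / (G * sqrt (1 + real (c t)))" for t
      by (simp add: e lnN_def c_def real_sqrt_divide)
    have epos: "e t > 0" for t using lnN0 G0 by (simp add: e')
    have cmono: "c t \<le> c (Suc t)" for t unfolding c_def by (intro card_mono) auto
    have emono: "e (Suc t) \<le> e t" for t
    proof -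
      have "sqrt (1 + real (c t)) \<le> sqrt (1 + real (c (Suc t)))" using cmono[of t] by simp
      hence "G * sqrt (1 + real (c t)) \<le> G * sqrt (1 + real (c (Suc t)))" using G0 by simp
      thus ?thesis unfolding e' using lnN0 G0
        by (intro divide_left_mono) (auto intro!: mult_pos_pos)
    qed
    define A where "A = (\<lambda>T'. {t\<in>{1..T'}. act t})"
    have main: "T' \<le> T \<Longrightarrow> (\<Sum>t=1..T'. \<Sum>i\<in>B. p t i * g t i)
        \<le> Wf B (e T') (C T') + G^2 / 2 * (\<Sum>t\<in>A T'. e (t - 1))" for T'
    proof (induction T')
      case 0
      have "Wf B (e 0) (C 0) = 0"
      proof -
        have "Wf B (e 0) (C 0) = Wf B (e 0) (\<lambda>_. 0)" by (rule Wf_cong) (simp add: C0)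
        also have "\<dots> = 0" using ne fin by (simp add: Wf_def card_gt_0_iff)
        finally show ?thesis .
      qed
      moreover have "A 0 = {}" by (auto simp: A_def)
      ultimately show ?case by simp
    next
      case (Suc T')
      have IH: "(\<Sum>t=1..T'. \<Sum>i\<in>B. p t i * g t i) \<le> Wf B (e T') (C T') + G^2 / 2 * (\<Sum>t\<in>A T'. e (t - 1))"
        using Suc by simp
      have tin: "Suc T' \<in> {1..T}" using Suc.prems by simp
      have pS: "p (Suc T') i = exp (- e T' * C T' i) / (\<Sum>j\<in>B. exp (- e T' * C T' j))" if "i \<in> B" for i
        using p[OF that, of "Suc T'"] by simp
      have mon: "Wf B (e T') (C (Suc T')) \<le> Wf B (e (Suc T')) (C (Suc T'))"
        by (rule Wf_mono[OF fin ne epos emono])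
      show ?case
      proof (cases "act (Suc T')")
        case True
        have AS: "A (Suc T') = insert (Suc T') (A T')" using True by (auto simp: A_def le_Suc_eq)
        have "(\<Sum>i\<in>B. p (Suc T') i * g (Suc T') i)
            = (\<Sum>i\<in>B. exp (- e T' * C T' i) / (\<Sum>j\<in>B. exp (- e T' * C T' j)) * g (Suc T') i)"
          by (rule sum.cong) (simp_all add: pS)
        also have "\<dots> \<le> Wf B (e T') (\<lambda>i. C T' i + g (Suc T') i) - Wf B (e T') (C T') + e T' * G^2 / 2"
          by (rule Wf_step[OF fin ne epos G0]) (rule bnd[OF tin])
        also have "Wf B (e T') (\<lambda>i. C T' i + g (Suc T') i) = Wf B (e T') (C (Suc T'))"
          by (rule Wf_cong) (simp add: CS)
        finally have step: "(\<Sum>i\<in>B. p (Suc T') i * g (Suc T') i)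
            \<le> Wf B (e T') (C (Suc T')) - Wf B (e T') (C T') + e T' * G^2 / 2" .
        have "(\<Sum>t\<in>A (Suc T'). e (t - 1)) = e T' + (\<Sum>t\<in>A T'. e (t - 1))"
          unfolding AS by (subst sum.insert) (auto simp: A_def)
        then show ?thesis using IH step mon by (simp add: algebra_simps)
      next
        case False
        have AS: "A (Suc T') = A T'" using False by (auto simp: A_def le_Suc_eq)
        have g0: "g (Suc T') i = 0" if "i \<in> B" for i using inact[OF tin False that] .
        have "(\<Sum>i\<in>B. p (Suc T') i * g (Suc T') i) = 0" by (simp add: g0)
        moreover have "Wf B (e T') (C (Suc T')) = Wf B (e T') (C T')"
          by (rule Wf_cong) (simp add: CS g0)
        ultimately show ?thesis using IH mon AS by simp
      qed
    qed
    have M: "(\<Sum>t=1..T. \<Sum>i\<in>B. p t i * g t i) \<le> Wf B (e T) (C T) + G^2 / 2 * (\<Sum>t\<in>A T. e (t - 1))"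
      by (rule main) simp
    have U: "Wf B (e T) (C T) \<le> (\<Sum>i\<in>B. v i * C T i) + lnN / e T"
      unfolding lnN_def by (rule Wf_upper[OF fin ne epos v0 v1])
    have nT: "c T = n" by (simp add: c_def n_def)
    have lnNe: "lnN / e T = G * sqrt lnN * sqrt (1 + real n)"
    proof -
      have "lnN = sqrt lnN * sqrt lnN" using lnN0 by simp
      then show ?thesis using lnN0 G0 by (simp add: e' nT field_simps)
    qed
    have sumE: "(\<Sum>t\<in>A T. e (t - 1)) = sqrt lnN / G * (\<Sum>t\<in>A T. 1 / sqrt (1 + real (card {s\<in>{1..t-1}. act s})))"
      by (simp add: e' c_def sum_distrib_left)
    have SB: "(\<Sum>t\<in>A T. 1 / sqrt (1 + real (card {s\<in>{1..t-1}. act s}))) \<le> 2 * sqrt (real n) - 1"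
    proof -
      have "n \<noteq> 0" using n1 by simp
      then show ?thesis using sqrt_sum_bound[of act T] unfolding A_def n_def[symmetric] by (simp only: if_False)
    qed
    have "(\<Sum>t=1..T. \<Sum>i\<in>B. g t i * (p t i - v i)) \<le> lnN / e T + G^2 / 2 * (\<Sum>t\<in>A T. e (t - 1))"
      using split M U by simp
    also have "\<dots> \<le> G * sqrt lnN * sqrt (1 + real n) + G^2 / 2 * (sqrt lnN / G * (2 * sqrt (real n) - 1))"
      unfolding lnNe sumE using SB G0 lnN0
      by (intro add_left_mono mult_left_mono) auto
    also have "\<dots> = G * sqrt lnN * (sqrt (1 + real n) + sqrt (real n) - 1 / 2)"
      using G0 by (simp add: field_simps power2_eq_square)
    also have "\<dots> \<le> G * sqrt lnN * (2 * sqrt (real n))"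
    proof -
      have sn: "sqrt (real n) \<ge> 1" using n1 by simp
      have "(sqrt (real n) + 1/2)^2 = real n + sqrt (real n) + 1/4"
        by (simp add: power2_eq_square algebra_simps)
      hence "1 + real n \<le> (sqrt (real n) + 1/2)^2" using sn by linarith
      hence "sqrt (1 + real n) \<le> sqrt (real n) + 1/2"
        using real_le_rsqrt sn by (metis real_sqrt_le_iff real_sqrt_unique add_nonneg_nonneg
            zero_le_divide_1_iff zero_le_numeral order_trans zero_le_one)
      thus ?thesis using G0 lnN0 by (intro mult_left_mono) auto
    qed
    also have "\<dots> = 2 * (G * sqrt (real n * lnN))"
      by (simp add: real_sqrt_mult)
    finally show ?thesis by (simp add: n_def lnN_def)
  qed
qed


lemma convex_grad:
  fixes f :: "real^'n::finite \<Rightarrow> real"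
  assumes cv: "convex_on S f" and u: "u \<in> S" and v: "v \<in> S" and df: "f differentiable at u"
  shows "(\<Sum>i\<in>UNIV. partial f u i * (v$i - u$i)) \<le> f v - f u"
proof -
  define D where "D = frechet_derivative f (at u)"
  have hD: "(f has_derivative D) (at u)" unfolding D_def using df by (rule frechet_derivative_works[THEN iffD1])
  have lin: "linear D" using hD by (rule has_derivative_linear)
  have exp: "v - u = (\<Sum>i\<in>UNIV. (v - u)$i *\<^sub>R axis i (1::real))"
    using basis_expansion[of "v - u"] by (simp add: scalar_mult_eq_scaleR)
  have Dvu: "D (v - u) = (\<Sum>i\<in>UNIV. partial f u i * (v$i - u$i))"
  proof -
    have "D (v - u) = (\<Sum>i\<in>UNIV. (v - u)$i * D (axis i 1))"
      by (subst exp) (simp add: linear_sum[OF lin] linear_cmul[OF lin])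
    then show ?thesis by (simp add: partial_def D_def mult.commute)
  qed
  define h where "h = (\<lambda>s::real. f (u + s *\<^sub>R (v - u)))"
  have hder: "(h has_derivative (\<lambda>s. D (s *\<^sub>R (v - u)))) (at 0)"
  proof -
    have l: "((\<lambda>s::real. u + s *\<^sub>R (v - u)) has_derivative (\<lambda>s. s *\<^sub>R (v - u))) (at 0)"
      by (auto intro!: derivative_eq_intros)
    have "(f has_derivative D) (at ((\<lambda>s::real. u + s *\<^sub>R (v - u)) 0))" using hD by simp
    from diff_chain_at[OF l this] show ?thesis by (simp add: h_def o_def)
  qed
  have "(\<lambda>s. D (s *\<^sub>R (v - u))) = (*) (D (v - u))"
    by (rule ext) (simp add: linear_cmul[OF lin] scalar_mult_eq_scaleR)
  with hder have "(h has_field_derivative D (v - u)) (at 0)"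
    by (simp add: has_field_derivative_def)
  hence lim: "((\<lambda>y. (h y - h 0) / (y - 0)) \<longlongrightarrow> D (v - u)) (at 0)"
    by (simp add: has_field_derivative_iff)
  hence lim': "((\<lambda>y. (h y - h 0) / (y - 0)) \<longlongrightarrow> D (v - u)) (at_right 0)"
    using filterlim_at_split by blast
  have ev: "eventually (\<lambda>y. (h y - h 0) / (y - 0) \<le> f v - f u) (at_right 0)"
    using eventually_at_right_real[OF zero_less_one]
  proof eventually_elim
    case (elim y)
    hence y: "0 < y" "y < 1" by auto
    have "h y = f ((1 - y) *\<^sub>R u + y *\<^sub>R v)" by (simp add: h_def algebra_simps)
    also have "\<dots> \<le> (1 - y) * f u + y * f v" using convex_onD[OF cv, of y u v] y u v by simp
    finally have "h y - h 0 \<le> y * (f v - f u)" by (simp add: h_def algebra_simps)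
    thus ?case using y by (simp add: divide_simps mult.commute)
  qed
  have "D (v - u) \<le> f v - f u"
    by (rule tendsto_upperbound[OF lim' ev]) simp
  thus ?thesis using Dvu by simp
qed


lemma weights_in:
  fixes blk :: "'n::finite \<Rightarrow> nat"
  assumes img: "blk ` UNIV = {..<K}"
  shows "weights K blk L G t c \<in> prod_simplex K blk"
proof -
  let ?w = "weights K blk L G t c"
  have comp: "?w $ i = exp (- eta K blk L G (blk i) t * c $ i) /
      (\<Sum>j\<in>{j. blk j = blk i}. exp (- eta K blk L G (blk i) t * c $ j))" for i
    by (simp add: weights_def)
  have nn: "0 \<le> ?w $ i" for i unfolding comp by (intro divide_nonneg_nonneg sum_nonneg) auto
  have s1: "(\<Sum>i\<in>{i. blk i = k}. ?w $ i) = 1" if k: "k < K" for k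
  proof -
    have "k \<in> blk ` UNIV" using k img by simp
    then have ne: "{i. blk i = k} \<noteq> {}" by auto
    define Z where "Z = (\<Sum>j\<in>{j. blk j = k}. exp (- eta K blk L G k t * c $ j))"
    have Z0: "Z > 0" unfolding Z_def by (rule sum_exp_pos) (use ne in auto)
    have "(\<Sum>i\<in>{i. blk i = k}. ?w $ i) = (\<Sum>i\<in>{i. blk i = k}. exp (- eta K blk L G k t * c $ i) / Z)"
      by (rule sum.cong) (auto simp: comp Z_def)
    also have "\<dots> = 1" using Z0 by (simp add: sum_divide_distrib[symmetric] Z_def)
    finally show ?thesis .
  qed
  show ?thesis unfolding prod_simplex_def using nn s1 by auto
qed


theorem theorem9:
  fixes K T :: nat and blk :: "'n::finite \<Rightarrow> nat"
    and L :: "nat \<Rightarrow> real^'n \<Rightarrow> real" and G :: "nat \<Rightarrow> real"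
  assumes "K \<ge> 1" and "T \<ge> 1"
    and "blk ` UNIV = {..<K}"
    and "\<And>t. t \<ge> 1 \<Longrightarrow> \<exists>S. open S \<and> prod_simplex K blk \<subseteq> S \<and> (\<forall>u\<in>S. L t differentiable at u)"
    and "\<And>t. t \<ge> 1 \<Longrightarrow> convex_on (prod_simplex K blk) (L t)"
    and "\<And>k. k < K \<Longrightarrow> G k > 0"
    and "\<And>t u i. t \<in> {1..T} \<Longrightarrow> u \<in> prod_simplex K blk \<Longrightarrow> \<bar>partial (L t) u i\<bar> \<le> G (blk i)"
  shows "\<forall>v\<in>prod_simplex K blk.
     (\<Sum>t=1..T. L t (ameg K blk L G t)) - (\<Sum>t=1..T. L t v)
       \<le> 2 * (\<Sum>k<K. G k * sqrt (real (card {t\<in>{1..T}. active K blk L k t}) * ln (real (blocksize blk k))))"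
proof
  fix v assume v: "v \<in> prod_simplex K blk"
  note img = assms(3) and dif = assms(4) and cvx = assms(5) and Gp = assms(6) and gb = assms(7)
  define S where "S = prod_simplex K blk"
  define u where "u = (\<lambda>t. ameg K blk L G t)"
  define g where "g = (\<lambda>t i. partial (L t) (u t) i)"
  have uS: "u t \<in> S" for t unfolding u_def ameg_def S_def by (rule weights_in[OF img])
  have blkK: "blk i < K" for i using img by auto
  have step: "L t (u t) - L t v \<le> (\<Sum>i\<in>UNIV. g t i * (u t $ i - v $ i))" if t: "t \<in> {1..T}" for t
  proof -
    have t1: "t \<ge> 1" using t by simp
    obtain Op where Op: "open Op" "S \<subseteq> Op" "\<forall>x\<in>Op. L t differentiable at x"
      using dif[OF t1] unfolding S_def by blast
    have "(\<Sum>i\<in>UNIV. partial (L t) (u t) i * (v $ i - u t $ i)) \<le> L t v - L t (u t)"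
      by (rule convex_grad[OF cvx[OF t1]]) (use uS v Op in \<open>auto simp: S_def\<close>)
    moreover have "(\<Sum>i\<in>UNIV. partial (L t) (u t) i * (v $ i - u t $ i))
        = - (\<Sum>i\<in>UNIV. g t i * (u t $ i - v $ i))"
      by (simp add: g_def algebra_simps sum_negf[symmetric])
    ultimately show ?thesis by simp
  qed
  have grp: "(\<Sum>i\<in>UNIV. F i) = (\<Sum>k<K. \<Sum>i\<in>{i. blk i = k}. F i)" for F :: "'n \<Rightarrow> real"
  proof -
    have "range blk \<subseteq> {..<K}" using blkK by auto
    then show ?thesis using sum.group[of UNIV "{..<K}" blk F] by simp
  qed
  have "(\<Sum>t=1..T. L t (u t)) - (\<Sum>t=1..T. L t v) = (\<Sum>t=1..T. L t (u t) - L t v)"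
    by (simp add: sum_subtractf)
  also have "\<dots> \<le> (\<Sum>t=1..T. \<Sum>i\<in>UNIV. g t i * (u t $ i - v $ i))"
    by (rule sum_mono) (rule step)
  also have "\<dots> = (\<Sum>k<K. \<Sum>t=1..T. \<Sum>i\<in>{i. blk i = k}. g t i * (u t $ i - v $ i))"
    by (subst grp) (rule sum.swap)
  also have "\<dots> \<le> (\<Sum>k<K. 2 * (G k * sqrt (real (card {t\<in>{1..T}. active K blk L k t}) * ln (real (blocksize blk k)))))"
  proof (rule sum_mono)
    fix k assume "k \<in> {..<K}"
    hence k: "k < K" by simp
    have "k \<in> blk ` UNIV" using k img by simp
    then have ne: "{i. blk i = k} \<noteq> {}" by auto
    have N1: "card {i. blk i = k} \<ge> 1" using ne by (simp add: Suc_le_eq card_gt_0_iff)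
    show "(\<Sum>t=1..T. \<Sum>i\<in>{i. blk i = k}. g t i * (u t $ i - v $ i))
        \<le> 2 * (G k * sqrt (real (card {t\<in>{1..T}. active K blk L k t}) * ln (real (blocksize blk k))))"
      unfolding blocksize_def
    proof (rule block_regret[where C = "\<lambda>t i. cumgrad K blk L G t $ i"
          and e = "eta K blk L G k"])
      show "finite {i. blk i = k}" by simp
      show "1 \<le> card {i. blk i = k}" by (rule N1)
      show "0 < G k" by (rule Gp[OF k])
      show "\<And>i. i \<in> {i. blk i = k} \<Longrightarrow> cumgrad K blk L G 0 $ i = 0" by simp
      show "\<And>t i. i \<in> {i. blk i = k} \<Longrightarrow> cumgrad K blk L G (Suc t) $ i = cumgrad K blk L G t $ i + g (Suc t) i"
        by (simp add: g_def u_def ameg_def grad_def)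
      show "\<And>t i. t \<in> {1..T} \<Longrightarrow> \<not> active K blk L k t \<Longrightarrow> i \<in> {i. blk i = k} \<Longrightarrow> g t i = 0"
        using uS unfolding active_def g_def S_def by fastforce
      show "\<And>t i. t \<in> {1..T} \<Longrightarrow> i \<in> {i. blk i = k} \<Longrightarrow> \<bar>g t i\<bar> \<le> G k"
        using gb uS unfolding g_def S_def by fastforce
      show "\<And>i. i \<in> {i. blk i = k} \<Longrightarrow> 0 \<le> v $ i" using v by (simp add: prod_simplex_def)
      show "(\<Sum>i\<in>{i. blk i = k}. v $ i) = 1" using v k by (simp add: prod_simplex_def)
      show "\<And>t. eta K blk L G k t = 1 / G k * sqrt (ln (real (card {i. blk i = k})) /
          (1 + real (card {s \<in> {1..t}. active K blk L k s})))"
        by (simp add: eta_def blocksize_def)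
      show "\<And>t i. i \<in> {i. blk i = k} \<Longrightarrow> u t $ i = exp (- eta K blk L G k (t - 1) * cumgrad K blk L G (t - 1) $ i) /
          (\<Sum>j\<in>{i. blk i = k}. exp (- eta K blk L G k (t - 1) * cumgrad K blk L G (t - 1) $ j))"
        by (simp add: u_def ameg_def weights_def)
    qed
  qed
  also have "\<dots> = 2 * (\<Sum>k<K. G k * sqrt (real (card {t\<in>{1..T}. active K blk L k t}) * ln (real (blocksize blk k))))"
    by (simp add: sum_distrib_left)
  finally show "(\<Sum>t=1..T. L t (ameg K blk L G t)) - (\<Sum>t=1..T. L t v)
       \<le> 2 * (\<Sum>k<K. G k * sqrt (real (card {t\<in>{1..T}. active K blk L k t}) * ln (real (blocksize blk k))))"
    by (simp add: u_def)
qed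

end
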